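(* Let $\Omega\subset\mathbb{R}^2$ be a domain, and let $p,q$ be real valued functions with $p\in C^2(\Omega)$ and $p>0$. Let $u_0\in C^2(\Omega)$ be a positive solution of $(\operatorname{div}p\operatorname{grad}+q)u=0$ in $\Omega$, and put $f=p^{1/2}u_0$. Let $W=W_1+iW_2\in C^2(\Omega)$ (with $W_1,W_2$ real valued) be a solution of $W_{\bar z}=\frac{f_{\bar z}}{f}\overline{W}$ in $\Omega$. Then: (i) $u=p^{-1/2}W_1$ is a solution of $(\operatorname{div}p\operatorname{grad}+q)u=0$ in $\Omega$; (ii) $v=p^{1/2}W_2$ is a solution of $(\operatorname{div}\frac1p\operatorname{grad}+q_1)v=0$ in $\Omega$, where $$q_1=-\frac1p\left(\frac qp+2\Big\langle\frac{\nabla p}{p},\frac{\nabla u_0}{u_0}\Big\rangle+2\Big(\frac{\nabla u_0}{u_0}\Big)^2\right).$$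
   Context: $\partial_{\bar z}=\frac12(\partial_x+i\partial_y)$. $\langle\cdot,\cdot\rangle$ is the Euclidean inner product in $\mathbb{R}^2$, and $(\nabla h)^2=h_x^2+h_y^2$. $(\operatorname{div}a\operatorname{grad}+b)\varphi=\operatorname{div}(a\nabla\varphi)+b\varphi$. *)

theory Defs
  imports "HOL-Analysis.Analysis"
begin

text \<open>The plane R^2 is identified with the complex plane: z = x + i y.\<close>

definition px :: "(complex \<Rightarrow> 'a::real_normed_vector) \<Rightarrow> complex \<Rightarrow> 'a" where
  "px f z = vector_derivative (\<lambda>t::real. f (z + complex_of_real t)) (at 0)"

definition py :: "(complex \<Rightarrow> 'a::real_normed_vector) \<Rightarrow> complex \<Rightarrow> 'a" where
  "py f z = vector_derivative (\<lambda>t::real. f (z + \<i> * complex_of_real t)) (at 0)"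

definition C1_on :: "complex set \<Rightarrow> (complex \<Rightarrow> 'a::real_normed_vector) \<Rightarrow> bool" where
  "C1_on S f \<longleftrightarrow> (\<forall>z\<in>S. f differentiable (at z)) \<and>
     continuous_on S (px f) \<and> continuous_on S (py f)"

definition C2_on :: "complex set \<Rightarrow> (complex \<Rightarrow> 'a::real_normed_vector) \<Rightarrow> bool" where
  "C2_on S f \<longleftrightarrow> C1_on S f \<and> C1_on S (px f) \<and> C1_on S (py f)"

definition dbar :: "(complex \<Rightarrow> complex) \<Rightarrow> complex \<Rightarrow> complex" where
  "dbar W z = (px W z + \<i> * py W z) / 2"

definition div_grad_op :: "(complex \<Rightarrow> real) \<Rightarrow> (complex \<Rightarrow> real) \<Rightarrow> (complex \<Rightarrow> real) \<Rightarrow> complex \<Rightarrow> real" where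
  "div_grad_op a b \<phi> z = px (\<lambda>w. a w * px \<phi> w) z + py (\<lambda>w. a w * py \<phi> w) z + b z * \<phi> z"

end

theory Submission
  imports Defs
begin


definition pd :: "complex \<Rightarrow> (complex \<Rightarrow> 'a::real_normed_vector) \<Rightarrow> complex \<Rightarrow> 'a" where
  "pd e f z = vector_derivative (\<lambda>t::real. f (z + e * complex_of_real t)) (at 0)"

lemma px_pd: "px f = pd 1 f" by (simp add: px_def pd_def fun_eq_iff)
lemma py_pd: "py f = pd \<i> f" by (simp add: py_def pd_def fun_eq_iff)

lemma line_vd:
  assumes "f differentiable (at z)"
  shows "((\<lambda>t::real. f (z + e * complex_of_real t)) has_vector_derivative pd e f z) (at 0)"
proof -
  obtain f' where f': "(f has_derivative f') (at z)" using assms unfolding differentiable_def by blast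
  have l: "((\<lambda>t::real. z + e * complex_of_real t) has_derivative (\<lambda>t. t *\<^sub>R e)) (at 0)"
    by (auto intro!: derivative_eq_intros simp: scaleR_conv_of_real mult.commute)
  have "((\<lambda>t::real. f (z + e * complex_of_real t)) has_derivative (\<lambda>t. f' (t *\<^sub>R e))) (at 0)"
    using has_derivative_compose[OF l] f' by simp
  moreover have "(\<lambda>t. f' (t *\<^sub>R e)) = (\<lambda>t. t *\<^sub>R f' e)"
    using has_derivative_bounded_linear[OF f'] by (simp add: linear_cmul[OF bounded_linear.linear])
  ultimately have "((\<lambda>t::real. f (z + e * complex_of_real t)) has_vector_derivative f' e) (at 0)"
    by (simp add: has_vector_derivative_def)
  then show ?thesis unfolding pd_def using vector_derivative_at by (metis)
qed

lemma line_rd: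
  fixes f :: "complex \<Rightarrow> real"
  assumes "f differentiable (at z)"
  shows "((\<lambda>t::real. f (z + e * complex_of_real t)) has_real_derivative pd e f z) (at 0)"
  using line_vd[OF assms] has_real_derivative_iff_has_vector_derivative by blast

lemma line_Re:
  fixes f :: "complex \<Rightarrow> complex"
  assumes "f differentiable (at z)"
  shows "((\<lambda>t::real. Re (f (z + e * complex_of_real t))) has_real_derivative Re (pd e f z)) (at 0)"
  using has_field_derivative_Re[OF line_vd[OF assms]] .

lemma line_Im:
  fixes f :: "complex \<Rightarrow> complex"
  assumes "f differentiable (at z)"
  shows "((\<lambda>t::real. Im (f (z + e * complex_of_real t))) has_real_derivative Im (pd e f z)) (at 0)"
  using has_field_derivative_Im[OF line_vd[OF assms]] .

lemma pd_eq:
  fixes f :: "complex \<Rightarrow> real"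
  assumes "((\<lambda>t::real. f (z + e * complex_of_real t)) has_real_derivative d) (at 0)"
  shows "pd e f z = d"
  unfolding pd_def using assms has_real_derivative_iff_has_vector_derivative vector_derivative_at by metis

lemma line_transfer:
  fixes F G :: "complex \<Rightarrow> real"
  assumes "open S" "z \<in> S" "\<And>w. w \<in> S \<Longrightarrow> F w = G w"
    and "((\<lambda>t::real. G (z + e * complex_of_real t)) has_real_derivative d) (at 0)"
  shows "((\<lambda>t::real. F (z + e * complex_of_real t)) has_real_derivative d) (at 0)"
proof -
  let ?T = "(\<lambda>t::real. z + e * complex_of_real t) -` S"
  have "open ?T"
    by (rule continuous_open_vimage[OF assms(1)]) (auto intro!: continuous_intros)
  show ?thesis
    apply (rule has_field_derivative_transform_within_open[OF assms(4) \<open>open ?T\<close>])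
    using assms by auto
qed

lemma line_shift:
  fixes f :: "complex \<Rightarrow> real"
  assumes "((\<lambda>t::real. f ((z + e * complex_of_real x) + e * complex_of_real t)) has_real_derivative d) (at 0)"
  shows "((\<lambda>t::real. f (z + e * complex_of_real t)) has_real_derivative d) (at x)"
proof -
  have "((\<lambda>t::real. f (z + e * complex_of_real (t + x))) has_real_derivative d) (at 0)"
    using assms by (simp add: algebra_simps)
  then show ?thesis using DERIV_shift[of "\<lambda>t. f (z + e * complex_of_real t)" d 0 x] by simp
qed



lemma mvt_line:
  fixes F D :: "complex \<Rightarrow> real"
  assumes "h > 0"
    and "\<And>x. 0 \<le> x \<Longrightarrow> x \<le> h \<Longrightarrow>
      ((\<lambda>t::real. F ((a + e * complex_of_real x) + e * complex_of_real t)) has_real_derivative D (a + e * complex_of_real x)) (at 0)"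
  shows "\<exists>\<xi>. 0 < \<xi> \<and> \<xi> < h \<and> F (a + e * complex_of_real h) - F a = h * D (a + e * complex_of_real \<xi>)"
proof -
  have "\<exists>\<xi>. 0 < \<xi> \<and> \<xi> < h \<and>
     (\<lambda>t. F (a + e * complex_of_real t)) h - (\<lambda>t. F (a + e * complex_of_real t)) 0 = (h - 0) * D (a + e * complex_of_real \<xi>)"
    apply (rule MVT2[OF assms(1)])
    apply (rule line_shift) using assms(2) by auto
  then show ?thesis by simp
qed

lemma schwarz:
  fixes g gx gy gxy gyx :: "complex \<Rightarrow> real"
  assumes S: "open S" "z \<in> S"
    and DX: "\<And>w. w \<in> S \<Longrightarrow> ((\<lambda>t::real. g (w + 1 * complex_of_real t)) has_real_derivative gx w) (at 0)"
    and DY: "\<And>w. w \<in> S \<Longrightarrow> ((\<lambda>t::real. g (w + \<i> * complex_of_real t)) has_real_derivative gy w) (at 0)"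
    and DXY: "\<And>w. w \<in> S \<Longrightarrow> ((\<lambda>t::real. gx (w + \<i> * complex_of_real t)) has_real_derivative gxy w) (at 0)"
    and DYX: "\<And>w. w \<in> S \<Longrightarrow> ((\<lambda>t::real. gy (w + 1 * complex_of_real t)) has_real_derivative gyx w) (at 0)"
    and C1: "continuous_on S gxy" and C2: "continuous_on S gyx"
  shows "gxy z = gyx z"
proof (rule ccontr)
  assume ne: "gxy z \<noteq> gyx z"
  define \<epsilon> where "\<epsilon> = \<bar>gxy z - gyx z\<bar> / 3"
  have ep: "\<epsilon> > 0" using ne by (simp add: \<epsilon>_def)
  obtain d0 where d0: "d0 > 0" "ball z d0 \<subseteq> S" using S openE by blast
  obtain d1 where d1: "d1 > 0" "\<And>w. w \<in> S \<Longrightarrow> dist w z < d1 \<Longrightarrow> dist (gxy w) (gxy z) < \<epsilon>"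
    using C1 S ep unfolding continuous_on_iff by (metis dist_commute)
  obtain d2 where d2: "d2 > 0" "\<And>w. w \<in> S \<Longrightarrow> dist w z < d2 \<Longrightarrow> dist (gyx w) (gyx z) < \<epsilon>"
    using C2 S ep unfolding continuous_on_iff by (metis dist_commute)
  define d where "d = min d0 (min d1 d2)"
  have d: "d > 0" using d0 d1 d2 by (simp add: d_def)
  define h where "h = d / 3"
  have h: "h > 0" using d by (simp add: h_def)
  have inS: "z + complex_of_real x + \<i> * complex_of_real y \<in> S \<and> dist (z + complex_of_real x + \<i> * complex_of_real y) z < d"
    if "0 \<le> x" "x \<le> h" "0 \<le> y" "y \<le> h" for x y
  proof -
    have "dist (z + complex_of_real x + \<i> * complex_of_real y) z = norm (complex_of_real x + \<i> * complex_of_real y)"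
      by (simp add: dist_norm)
    also have "\<dots> \<le> norm (complex_of_real x) + norm (\<i> * complex_of_real y)" by (rule norm_triangle_ineq)
    also have "\<dots> = \<bar>x\<bar> + \<bar>y\<bar>" by (simp add: norm_mult)
    also have "\<dots> < d" using that h by (simp add: h_def)
    finally have "dist (z + complex_of_real x + \<i> * complex_of_real y) z < d" .
    moreover then have "z + complex_of_real x + \<i> * complex_of_real y \<in> ball z d0"
      by (simp add: d_def dist_commute)
    ultimately show ?thesis using d0 by auto
  qed
  define \<Delta> where "\<Delta> = g (z + complex_of_real h + \<i> * complex_of_real h) - g (z + \<i> * complex_of_real h)
     - g (z + complex_of_real h) + g z"
  obtain \<xi> where \<xi>: "0 < \<xi>" "\<xi> < h" "(\<lambda>w. g (w + \<i> * complex_of_real h) - g w) (z + 1 * complex_of_real h)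
      - (\<lambda>w. g (w + \<i> * complex_of_real h) - g w) z = h * (\<lambda>w. gx (w + \<i> * complex_of_real h) - gx w) (z + 1 * complex_of_real \<xi>)"
  proof -
    have "\<exists>\<xi>. 0 < \<xi> \<and> \<xi> < h \<and> (\<lambda>w. g (w + \<i> * complex_of_real h) - g w) (z + 1 * complex_of_real h)
      - (\<lambda>w. g (w + \<i> * complex_of_real h) - g w) z = h * (\<lambda>w. gx (w + \<i> * complex_of_real h) - gx w) (z + 1 * complex_of_real \<xi>)"
    proof (rule mvt_line[OF h])
      fix x assume x: "0 \<le> x" "x \<le> h"
      have a: "((\<lambda>t::real. g ((z + complex_of_real x + \<i> * complex_of_real h) + 1 * complex_of_real t)) has_real_derivative gx (z + complex_of_real x + \<i> * complex_of_real h)) (at 0)"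
        using DX inS[OF x, of h] h by auto
      have b: "((\<lambda>t::real. g ((z + complex_of_real x + \<i> * complex_of_real 0) + 1 * complex_of_real t)) has_real_derivative gx (z + complex_of_real x + \<i> * complex_of_real 0)) (at 0)"
        using DX inS[OF x, of 0] h by auto
      show "((\<lambda>t::real. (\<lambda>w. g (w + \<i> * complex_of_real h) - g w) ((z + 1 * complex_of_real x) + 1 * complex_of_real t)) has_real_derivative (\<lambda>w. gx (w + \<i> * complex_of_real h) - gx w) (z + 1 * complex_of_real x)) (at 0)"
        using DERIV_diff[OF a b] by (simp add: ac_simps)
    qed
    then show ?thesis using that by blast
  qed
  obtain \<eta> where \<eta>: "0 < \<eta>" "\<eta> < h" "gx ((z + complex_of_real \<xi>) + \<i> * complex_of_real h) - gx (z + complex_of_real \<xi>)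
      = h * gxy ((z + complex_of_real \<xi>) + \<i> * complex_of_real \<eta>)"
  proof -
    have "\<exists>\<eta>. 0 < \<eta> \<and> \<eta> < h \<and> gx ((z + complex_of_real \<xi>) + \<i> * complex_of_real h) - gx (z + complex_of_real \<xi>)
      = h * gxy ((z + complex_of_real \<xi>) + \<i> * complex_of_real \<eta>)"
    proof (rule mvt_line[OF h])
      fix y assume y: "0 \<le> y" "y \<le> h"
      show "((\<lambda>t::real. gx ((z + complex_of_real \<xi> + \<i> * complex_of_real y) + \<i> * complex_of_real t)) has_real_derivative gxy (z + complex_of_real \<xi> + \<i> * complex_of_real y)) (at 0)"
        using DXY inS[of \<xi> y] y \<xi> by auto
    qed
    then show ?thesis using that by blast
  qed
  have D1: "\<Delta> = h * h * gxy (z + complex_of_real \<xi> + \<i> * complex_of_real \<eta>)"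
    using \<xi>(3) \<eta>(3) by (simp add: \<Delta>_def algebra_simps)
  obtain \<eta>' where \<eta>': "0 < \<eta>'" "\<eta>' < h" "(\<lambda>w. g (w + complex_of_real h) - g w) (z + \<i> * complex_of_real h)
      - (\<lambda>w. g (w + complex_of_real h) - g w) z = h * (\<lambda>w. gy (w + complex_of_real h) - gy w) (z + \<i> * complex_of_real \<eta>')"
  proof -
    have "\<exists>\<eta>'. 0 < \<eta>' \<and> \<eta>' < h \<and> (\<lambda>w. g (w + complex_of_real h) - g w) (z + \<i> * complex_of_real h)
      - (\<lambda>w. g (w + complex_of_real h) - g w) z = h * (\<lambda>w. gy (w + complex_of_real h) - gy w) (z + \<i> * complex_of_real \<eta>')"
    proof (rule mvt_line[OF h])
      fix y assume y: "0 \<le> y" "y \<le> h"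
      have a: "((\<lambda>t::real. g ((z + complex_of_real h + \<i> * complex_of_real y) + \<i> * complex_of_real t)) has_real_derivative gy (z + complex_of_real h + \<i> * complex_of_real y)) (at 0)"
        using DY inS[OF _ _ y, of h] h by auto
      have b: "((\<lambda>t::real. g ((z + complex_of_real 0 + \<i> * complex_of_real y) + \<i> * complex_of_real t)) has_real_derivative gy (z + complex_of_real 0 + \<i> * complex_of_real y)) (at 0)"
        using DY inS[OF _ _ y, of 0] h by auto
      show "((\<lambda>t::real. (\<lambda>w. g (w + complex_of_real h) - g w) ((z + \<i> * complex_of_real y) + \<i> * complex_of_real t)) has_real_derivative (\<lambda>w. gy (w + complex_of_real h) - gy w) (z + \<i> * complex_of_real y)) (at 0)"
        using DERIV_diff[OF a b] by (simp add: ac_simps)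
    qed
    then show ?thesis using that by blast
  qed
  obtain \<xi>' where \<xi>': "0 < \<xi>'" "\<xi>' < h" "gy ((z + \<i> * complex_of_real \<eta>') + 1 * complex_of_real h) - gy (z + \<i> * complex_of_real \<eta>')
      = h * gyx ((z + \<i> * complex_of_real \<eta>') + 1 * complex_of_real \<xi>')"
  proof -
    have "\<exists>\<xi>'. 0 < \<xi>' \<and> \<xi>' < h \<and> gy ((z + \<i> * complex_of_real \<eta>') + 1 * complex_of_real h) - gy (z + \<i> * complex_of_real \<eta>')
      = h * gyx ((z + \<i> * complex_of_real \<eta>') + 1 * complex_of_real \<xi>')"
    proof (rule mvt_line[OF h])
      fix x assume x: "0 \<le> x" "x \<le> h"
      show "((\<lambda>t::real. gy ((z + \<i> * complex_of_real \<eta>' + 1 * complex_of_real x) + 1 * complex_of_real t)) has_real_derivative gyx (z + \<i> * complex_of_real \<eta>' + 1 * complex_of_real x)) (at 0)"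
      proof -
        have "z + \<i> * complex_of_real \<eta>' + 1 * complex_of_real x \<in> S"
          using inS[OF x, of \<eta>'] \<eta>' by (simp add: ac_simps)
        from DYX[OF this] show ?thesis by simp
      qed
    qed
    then show ?thesis using that by blast
  qed
  have D2: "\<Delta> = h * h * gyx (z + complex_of_real \<xi>' + \<i> * complex_of_real \<eta>')"
    using \<xi>'(3) \<eta>'(3) by (simp add: \<Delta>_def algebra_simps)
  have eq: "gxy (z + complex_of_real \<xi> + \<i> * complex_of_real \<eta>) = gyx (z + complex_of_real \<xi>' + \<i> * complex_of_real \<eta>')"
    using D1 D2 h by simp
  have e1: "\<bar>gxy (z + complex_of_real \<xi> + \<i> * complex_of_real \<eta>) - gxy z\<bar> < \<epsilon>"
    using d1(2)[of "z + complex_of_real \<xi> + \<i> * complex_of_real \<eta>"] inS[of \<xi> \<eta>] \<xi> \<eta>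
    by (simp add: d_def dist_real_def)
  have e2: "\<bar>gyx (z + complex_of_real \<xi>' + \<i> * complex_of_real \<eta>') - gyx z\<bar> < \<epsilon>"
    using d2(2)[of "z + complex_of_real \<xi>' + \<i> * complex_of_real \<eta>'"] inS[of \<xi>' \<eta>'] \<xi>' \<eta>'
    by (simp add: d_def dist_real_def)
  show False using e1 e2 eq \<epsilon>_def by (auto simp: abs_if split: if_splits)
qed



lemma C1_diff: "C1_on S f \<Longrightarrow> w \<in> S \<Longrightarrow> f differentiable (at w)"
  by (simp add: C1_on_def)

lemma jet_real:
  fixes g :: "complex \<Rightarrow> real"
  assumes S: "open S" and g: "C2_on S g" and w: "w \<in> S"
  shows "((\<lambda>t::real. g (w + 1 * complex_of_real t)) has_real_derivative pd 1 g w) (at 0)"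
    "((\<lambda>t::real. g (w + \<i> * complex_of_real t)) has_real_derivative pd \<i> g w) (at 0)"
    "((\<lambda>t::real. pd 1 g (w + 1 * complex_of_real t)) has_real_derivative pd 1 (pd 1 g) w) (at 0)"
    "((\<lambda>t::real. pd 1 g (w + \<i> * complex_of_real t)) has_real_derivative pd \<i> (pd 1 g) w) (at 0)"
    "((\<lambda>t::real. pd \<i> g (w + 1 * complex_of_real t)) has_real_derivative pd 1 (pd \<i> g) w) (at 0)"
    "((\<lambda>t::real. pd \<i> g (w + \<i> * complex_of_real t)) has_real_derivative pd \<i> (pd \<i> g) w) (at 0)"
    "pd \<i> (pd 1 g) w = pd 1 (pd \<i> g) w"
proof -
  have g1: "C1_on S g" "C1_on S (pd 1 g)" "C1_on S (pd \<i> g)"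
    using g by (auto simp: C2_on_def px_pd py_pd)
  note d = C1_diff[OF g1(1)] C1_diff[OF g1(2)] C1_diff[OF g1(3)]
  show A: "((\<lambda>t::real. g (w + 1 * complex_of_real t)) has_real_derivative pd 1 g w) (at 0)"
    "((\<lambda>t::real. g (w + \<i> * complex_of_real t)) has_real_derivative pd \<i> g w) (at 0)"
    "((\<lambda>t::real. pd 1 g (w + 1 * complex_of_real t)) has_real_derivative pd 1 (pd 1 g) w) (at 0)"
    "((\<lambda>t::real. pd 1 g (w + \<i> * complex_of_real t)) has_real_derivative pd \<i> (pd 1 g) w) (at 0)"
    "((\<lambda>t::real. pd \<i> g (w + 1 * complex_of_real t)) has_real_derivative pd 1 (pd \<i> g) w) (at 0)"
    "((\<lambda>t::real. pd \<i> g (w + \<i> * complex_of_real t)) has_real_derivative pd \<i> (pd \<i> g) w) (at 0)"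
    using line_rd d w by blast+
  show "pd \<i> (pd 1 g) w = pd 1 (pd \<i> g) w"
    apply (rule schwarz[OF S w, of g "pd 1 g" "pd \<i> g"])
    using line_rd line_rd[where e=1, simplified] d g1 by (auto simp: C1_on_def px_pd py_pd)
qed

lemma jet_cpx:
  fixes W :: "complex \<Rightarrow> complex"
  assumes S: "open S" and g: "C2_on S W" and w: "w \<in> S"
  shows "((\<lambda>t::real. Re (W (w + 1 * complex_of_real t))) has_real_derivative Re (pd 1 W w)) (at 0)"
    "((\<lambda>t::real. Re (W (w + \<i> * complex_of_real t))) has_real_derivative Re (pd \<i> W w)) (at 0)"
    "((\<lambda>t::real. Re (pd 1 W (w + 1 * complex_of_real t))) has_real_derivative Re (pd 1 (pd 1 W) w)) (at 0)"
    "((\<lambda>t::real. Re (pd 1 W (w + \<i> * complex_of_real t))) has_real_derivative Re (pd \<i> (pd 1 W) w)) (at 0)"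
    "((\<lambda>t::real. Re (pd \<i> W (w + 1 * complex_of_real t))) has_real_derivative Re (pd 1 (pd \<i> W) w)) (at 0)"
    "((\<lambda>t::real. Re (pd \<i> W (w + \<i> * complex_of_real t))) has_real_derivative Re (pd \<i> (pd \<i> W) w)) (at 0)"
    "((\<lambda>t::real. Im (W (w + 1 * complex_of_real t))) has_real_derivative Im (pd 1 W w)) (at 0)"
    "((\<lambda>t::real. Im (W (w + \<i> * complex_of_real t))) has_real_derivative Im (pd \<i> W w)) (at 0)"
    "((\<lambda>t::real. Im (pd 1 W (w + 1 * complex_of_real t))) has_real_derivative Im (pd 1 (pd 1 W) w)) (at 0)"
    "((\<lambda>t::real. Im (pd 1 W (w + \<i> * complex_of_real t))) has_real_derivative Im (pd \<i> (pd 1 W) w)) (at 0)"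
    "((\<lambda>t::real. Im (pd \<i> W (w + 1 * complex_of_real t))) has_real_derivative Im (pd 1 (pd \<i> W) w)) (at 0)"
    "((\<lambda>t::real. Im (pd \<i> W (w + \<i> * complex_of_real t))) has_real_derivative Im (pd \<i> (pd \<i> W) w)) (at 0)"
    "Re (pd \<i> (pd 1 W) w) = Re (pd 1 (pd \<i> W) w)"
    "Im (pd \<i> (pd 1 W) w) = Im (pd 1 (pd \<i> W) w)"
proof -
  have g1: "C1_on S W" "C1_on S (pd 1 W)" "C1_on S (pd \<i> W)"
    using g by (auto simp: C2_on_def px_pd py_pd)
  note d = C1_diff[OF g1(1)] C1_diff[OF g1(2)] C1_diff[OF g1(3)]
  show "((\<lambda>t::real. Re (W (w + 1 * complex_of_real t))) has_real_derivative Re (pd 1 W w)) (at 0)"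
    "((\<lambda>t::real. Re (W (w + \<i> * complex_of_real t))) has_real_derivative Re (pd \<i> W w)) (at 0)"
    "((\<lambda>t::real. Re (pd 1 W (w + 1 * complex_of_real t))) has_real_derivative Re (pd 1 (pd 1 W) w)) (at 0)"
    "((\<lambda>t::real. Re (pd 1 W (w + \<i> * complex_of_real t))) has_real_derivative Re (pd \<i> (pd 1 W) w)) (at 0)"
    "((\<lambda>t::real. Re (pd \<i> W (w + 1 * complex_of_real t))) has_real_derivative Re (pd 1 (pd \<i> W) w)) (at 0)"
    "((\<lambda>t::real. Re (pd \<i> W (w + \<i> * complex_of_real t))) has_real_derivative Re (pd \<i> (pd \<i> W) w)) (at 0)"
    "((\<lambda>t::real. Im (W (w + 1 * complex_of_real t))) has_real_derivative Im (pd 1 W w)) (at 0)"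
    "((\<lambda>t::real. Im (W (w + \<i> * complex_of_real t))) has_real_derivative Im (pd \<i> W w)) (at 0)"
    "((\<lambda>t::real. Im (pd 1 W (w + 1 * complex_of_real t))) has_real_derivative Im (pd 1 (pd 1 W) w)) (at 0)"
    "((\<lambda>t::real. Im (pd 1 W (w + \<i> * complex_of_real t))) has_real_derivative Im (pd \<i> (pd 1 W) w)) (at 0)"
    "((\<lambda>t::real. Im (pd \<i> W (w + 1 * complex_of_real t))) has_real_derivative Im (pd 1 (pd \<i> W) w)) (at 0)"
    "((\<lambda>t::real. Im (pd \<i> W (w + \<i> * complex_of_real t))) has_real_derivative Im (pd \<i> (pd \<i> W) w)) (at 0)"
    using line_Re line_Im d w by blast+
  show "Re (pd \<i> (pd 1 W) w) = Re (pd 1 (pd \<i> W) w)"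
    apply (rule schwarz[OF S w, of "\<lambda>w. Re (W w)" "\<lambda>w. Re (pd 1 W w)" "\<lambda>w. Re (pd \<i> W w)"
          "\<lambda>w. Re (pd \<i> (pd 1 W) w)" "\<lambda>w. Re (pd 1 (pd \<i> W) w)"])
    using line_Re line_Re[where e=1, simplified] d g1 by (auto simp: C1_on_def px_pd py_pd intro!: continuous_intros)
  show "Im (pd \<i> (pd 1 W) w) = Im (pd 1 (pd \<i> W) w)"
    apply (rule schwarz[OF S w, of "\<lambda>w. Im (W w)" "\<lambda>w. Im (pd 1 W w)" "\<lambda>w. Im (pd \<i> W w)"
          "\<lambda>w. Im (pd \<i> (pd 1 W) w)" "\<lambda>w. Im (pd 1 (pd \<i> W) w)"])
    using line_Im line_Im[where e=1, simplified] d g1 by (auto simp: C1_on_def px_pd py_pd intro!: continuous_intros)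
qed



lemma sqrt_line:
  fixes p :: "complex \<Rightarrow> real"
  assumes "((\<lambda>t::real. p (w + e * complex_of_real t)) has_real_derivative d) (at 0)" "p w > 0"
  shows "((\<lambda>t::real. sqrt (p (w + e * complex_of_real t))) has_real_derivative d / (2 * sqrt (p w))) (at 0)"
proof -
  have s: "(sqrt has_real_derivative inverse (sqrt (p w)) / 2) (at (p (w + e * complex_of_real 0)))"
    using DERIV_real_sqrt[OF assms(2)] by simp
  show ?thesis
    by (rule DERIV_cong[OF DERIV_chain2[OF s assms(1)]]) (simp add: divide_simps)
qed

lemma sqrt_line1:
  fixes p :: "complex \<Rightarrow> real"
  assumes "((\<lambda>t::real. p (w + complex_of_real t)) has_real_derivative d) (at 0)" "p w > 0"
  shows "((\<lambda>t::real. sqrt (p (w + complex_of_real t))) has_real_derivative d / (2 * sqrt (p w))) (at 0)"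
  using sqrt_line[of p w 1] assms by simp



lemma alg_i:
  fixes P Px Py Pxx Pyy Pxy U Ux Uy Uxx Uyy Uxy A Ax Ay Axx Ayy B Bx By Bxy q s :: real
  assumes P: "P > 0" and U: "U > 0" and s: "s > 0" "s * s = P"
  and H0: "Px*Ux + P*Uxx + Py*Uy + P*Uyy + q*U = 0"
  and E1: "Ax - By = (Px/(2*P) + Ux/U)*A + (Py/(2*P) + Uy/U)*B"
  and E2: "Bx + Ay = (Py/(2*P) + Uy/U)*A - (Px/(2*P) + Ux/U)*B"
  and E1x: "Axx - Bxy = ((Pxx*P - Px*Px)/(2*P^2) + (Uxx*U - Ux*Ux)/U^2)*A + (Px/(2*P) + Ux/U)*Ax
       + ((Pxy*P - Py*Px)/(2*P^2) + (Uxy*U - Uy*Ux)/U^2)*B + (Py/(2*P) + Uy/U)*Bx"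
  and E2y: "Bxy + Ayy = ((Pyy*P - Py*Py)/(2*P^2) + (Uyy*U - Uy*Uy)/U^2)*A + (Py/(2*P) + Uy/U)*Ay
       - ((Pxy*P - Px*Py)/(2*P^2) + (Uxy*U - Ux*Uy)/U^2)*B - (Px/(2*P) + Ux/U)*By"
  shows "(Px * ((Ax - A*Px/(2*P))/s) + P * ((Axx - (Ax*Px + A*Pxx)/(2*P) + A*Px*Px/(2*P^2))/s - (Ax - A*Px/(2*P))*Px/(2* s*P)))
       + (Py * ((Ay - A*Py/(2*P))/s) + P * ((Ayy - (Ay*Py + A*Pyy)/(2*P) + A*Py*Py/(2*P^2))/s - (Ay - A*Py/(2*P))*Py/(2* s*P)))
       + q * (A / s) = 0"
proof -
  define a where "a = Px/(2*P) + Ux/U"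
  define b where "b = Py/(2*P) + Uy/U"
  define ax where "ax = (Pxx*P - Px*Px)/(2*P^2) + (Uxx*U - Ux*Ux)/U^2"
  define by' where "by' = (Pyy*P - Py*Py)/(2*P^2) + (Uyy*U - Uy*Uy)/U^2"
  define c where "c = (Pxy*P - Py*Px)/(2*P^2) + (Uxy*U - Uy*Ux)/U^2"
  have c2: "(Pxy*P - Px*Py)/(2*P^2) + (Uxy*U - Ux*Uy)/U^2 = c" by (simp add: c_def algebra_simps)
  have "Axx + Ayy = ax*A + a*Ax + c*B + b*Bx + by'*A + b*Ay - c*B - a*By"
    using E1x[folded a_def b_def ax_def c_def] E2y[unfolded c2, folded a_def b_def by'_def] by linarith
  also have "\<dots> = (ax + by')*A + a*(Ax - By) + b*(Bx + Ay)" by (simp add: algebra_simps)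
  also have "\<dots> = (ax + by')*A + a*(a*A + b*B) + b*(b*A - a*B)"
    using E1[folded a_def b_def] E2[folded a_def b_def] by simp
  also have "\<dots> = (ax + by' + a*a + b*b)*A" by (simp add: algebra_simps)
  finally have L: "Axx + Ayy = (ax + by' + a*a + b*b)*A" .
  have Uyy: "Uyy = -(Px*Ux + P*Uxx + Py*Uy + q*U)/P" using H0 P by (simp add: field_simps)
  have "(Px * ((Ax - A*Px/(2*P))/s) + P * ((Axx - (Ax*Px + A*Pxx)/(2*P) + A*Px*Px/(2*P^2))/s - (Ax - A*Px/(2*P))*Px/(2* s*P)))
       + (Py * ((Ay - A*Py/(2*P))/s) + P * ((Ayy - (Ay*Py + A*Pyy)/(2*P) + A*Py*Py/(2*P^2))/s - (Ay - A*Py/(2*P))*Py/(2* s*P)))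
       + q * (A / s) = (P * (Axx + Ayy) - A*(Pxx+Pyy)/2 + A*(Px*Px+Py*Py)/(4*P) + q*A)/s"
    using s(1) unfolding s(2)[symmetric] by (simp add: field_simps power2_eq_square; simp add: algebra_simps)
  also have "\<dots> = 0"
    unfolding L a_def b_def ax_def by'_def Uyy using U s(1) unfolding s(2)[symmetric]
    by (simp add: field_simps power2_eq_square; simp add: algebra_simps)
  finally show ?thesis .
qed

lemma alg_ii:
  fixes P Px Py Pxx Pyy Pxy U Ux Uy Uxx Uyy Uxy A Ax Ay Axy B Bx By Bxx Byy q s :: real
  assumes P: "P > 0" and U: "U > 0" and s: "s > 0" "s * s = P"
  and H0: "Px*Ux + P*Uxx + Py*Uy + P*Uyy + q*U = 0"
  and E1: "Ax - By = (Px/(2*P) + Ux/U)*A + (Py/(2*P) + Uy/U)*B"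
  and E2: "Bx + Ay = (Py/(2*P) + Uy/U)*A - (Px/(2*P) + Ux/U)*B"
  and E2x: "Bxx + Axy = ((Pxy*P - Py*Px)/(2*P^2) + (Uxy*U - Uy*Ux)/U^2)*A + (Py/(2*P) + Uy/U)*Ax
       - ((Pxx*P - Px*Px)/(2*P^2) + (Uxx*U - Ux*Ux)/U^2)*B - (Px/(2*P) + Ux/U)*Bx"
  and E1y: "Axy - Byy = ((Pxy*P - Px*Py)/(2*P^2) + (Uxy*U - Ux*Uy)/U^2)*A + (Px/(2*P) + Ux/U)*Ay
       + ((Pyy*P - Py*Py)/(2*P^2) + (Uyy*U - Uy*Uy)/U^2)*B + (Py/(2*P) + Uy/U)*By"
  shows "(- Px/(P*P) * (Px/(2* s)*B + s*Bx) + (1/P) * ((Pxx/(2* s) - Px*Px/(4* s*P))*B + Px/s*Bx + s*Bxx))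
       + (- Py/(P*P) * (Py/(2* s)*B + s*By) + (1/P) * ((Pyy/(2* s) - Py*Py/(4* s*P))*B + Py/s*By + s*Byy))
       + (- (1/P) * (q/P + 2*((Px/P)*(Ux/U) + (Py/P)*(Uy/U)) + 2*((Ux/U)^2 + (Uy/U)^2))) * (s * B) = 0"
proof -
  define a where "a = Px/(2*P) + Ux/U"
  define b where "b = Py/(2*P) + Uy/U"
  define ax where "ax = (Pxx*P - Px*Px)/(2*P^2) + (Uxx*U - Ux*Ux)/U^2"
  define by' where "by' = (Pyy*P - Py*Py)/(2*P^2) + (Uyy*U - Uy*Uy)/U^2"
  define c where "c = (Pxy*P - Py*Px)/(2*P^2) + (Uxy*U - Uy*Ux)/U^2"
  have c2: "(Pxy*P - Px*Py)/(2*P^2) + (Uxy*U - Ux*Uy)/U^2 = c" by (simp add: c_def algebra_simps)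
  have "Bxx + Byy = c*A + b*Ax - ax*B - a*Bx - (c*A + a*Ay + by'*B + b*By)"
    using E2x[folded a_def b_def ax_def c_def] E1y[unfolded c2, folded a_def b_def by'_def] by linarith
  also have "\<dots> = - (ax + by')*B + b*(Ax - By) - a*(Bx + Ay)" by (simp add: algebra_simps)
  also have "\<dots> = - (ax + by')*B + b*(a*A + b*B) - a*(b*A - a*B)"
    using E1[folded a_def b_def] E2[folded a_def b_def] by simp
  also have "\<dots> = (a*a + b*b - ax - by')*B" by (simp add: algebra_simps)
  finally have L: "Bxx + Byy = (a*a + b*b - ax - by')*B" .
  have Uyy: "Uyy = -(Px*Ux + P*Uxx + Py*Uy + q*U)/P" using H0 P by (simp add: field_simps)
  have "(- Px/(P*P) * (Px/(2* s)*B + s*Bx) + (1/P) * ((Pxx/(2* s) - Px*Px/(4* s*P))*B + Px/s*Bx + s*Bxx))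
       + (- Py/(P*P) * (Py/(2* s)*B + s*By) + (1/P) * ((Pyy/(2* s) - Py*Py/(4* s*P))*B + Py/s*By + s*Byy))
       + (- (1/P) * (q/P + 2*((Px/P)*(Ux/U) + (Py/P)*(Uy/U)) + 2*((Ux/U)^2 + (Uy/U)^2))) * (s * B)
     = (s * (Bxx + Byy) - Px*Px*B/(2* s*P) - Py*Py*B/(2* s*P) + (Pxx + Pyy)*B/(2* s) - Px*Px*B/(4* s*P) - Py*Py*B/(4* s*P))/P
       + (- (1/P) * (q/P + 2*((Px/P)*(Ux/U) + (Py/P)*(Uy/U)) + 2*((Ux/U)^2 + (Uy/U)^2))) * (s * B)"
    using s(1) unfolding s(2)[symmetric] by (simp add: field_simps power2_eq_square; simp add: algebra_simps)
  also have "\<dots> = 0"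
    unfolding L a_def b_def ax_def by'_def Uyy using U s(1) unfolding s(2)[symmetric]
    by (simp add: field_simps power2_eq_square; simp add: algebra_simps)
  finally show ?thesis .
qed



lemma pd_eq1:
  fixes f :: "complex \<Rightarrow> real"
  assumes "((\<lambda>t::real. f (z + complex_of_real t)) has_real_derivative d) (at 0)"
  shows "pd 1 f z = d"
  using pd_eq[of f z 1 d] assms by simp

lemma line_transfer1:
  fixes F G :: "complex \<Rightarrow> real"
  assumes "open S" "z \<in> S" "\<And>w. w \<in> S \<Longrightarrow> F w = G w"
    and "((\<lambda>t::real. G (z + complex_of_real t)) has_real_derivative d) (at 0)"
  shows "((\<lambda>t::real. F (z + complex_of_real t)) has_real_derivative d) (at 0)"
  using line_transfer[of S z F G 1 d] assms by simp

lemma line_unique: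
  fixes F G :: "complex \<Rightarrow> real"
  assumes "open S" "z \<in> S" "\<And>w. w \<in> S \<Longrightarrow> F w = G w"
    and "((\<lambda>t::real. F (z + e * complex_of_real t)) has_real_derivative d1) (at 0)"
    and "((\<lambda>t::real. G (z + e * complex_of_real t)) has_real_derivative d2) (at 0)"
  shows "d1 = d2"
  using line_transfer[OF assms(1,2,3,5)] assms(4) DERIV_unique by blast

lemma line_unique1:
  fixes F G :: "complex \<Rightarrow> real"
  assumes "open S" "z \<in> S" "\<And>w. w \<in> S \<Longrightarrow> F w = G w"
    and "((\<lambda>t::real. F (z + complex_of_real t)) has_real_derivative d1) (at 0)"
    and "((\<lambda>t::real. G (z + complex_of_real t)) has_real_derivative d2) (at 0)"
  shows "d1 = d2"
  using line_unique[of S z F G 1 d1 d2] assms by simp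

lemma pd_ofreal:
  fixes F :: "complex \<Rightarrow> real"
  assumes "((\<lambda>t::real. F (z + e * complex_of_real t)) has_real_derivative d) (at 0)"
  shows "pd e (\<lambda>w. complex_of_real (F w)) z = complex_of_real d"
  unfolding pd_def by (rule vector_derivative_at[OF has_vector_derivative_of_real[OF assms]])

lemma pd_ofreal1:
  fixes F :: "complex \<Rightarrow> real"
  assumes "((\<lambda>t::real. F (z + complex_of_real t)) has_real_derivative d) (at 0)"
  shows "pd 1 (\<lambda>w. complex_of_real (F w)) z = complex_of_real d"
  using pd_ofreal[of F z 1 d] assms by simp

lemma E_alg:
  fixes X Y V :: complex and fx fy f :: real
  assumes "f \<noteq> 0" "(X + \<i> * Y) / 2 = (complex_of_real fx + \<i> * complex_of_real fy) / 2 / complex_of_real f * cnj V"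
  shows "Re X - Im Y = fx / f * Re V + fy / f * Im V" "Im X + Re Y = fy / f * Re V - fx / f * Im V"
proof -
  have "X + \<i> * Y = (complex_of_real fx + \<i> * complex_of_real fy) * cnj V / complex_of_real f"
  proof -
    have nz: "complex_of_real f \<noteq> 0" using assms(1) by simp
    have "X + \<i> * Y = 2 * ((X + \<i> * Y) / 2)" by simp
    also have "\<dots> = 2 * ((complex_of_real fx + \<i> * complex_of_real fy) / 2 / complex_of_real f * cnj V)"
      using assms(2) by simp
    also have "\<dots> = (complex_of_real fx + \<i> * complex_of_real fy) * cnj V / complex_of_real f"
      using nz by (simp add: field_simps)
    finally show ?thesis .
  qed
  then have r: "Re (X + \<i> * Y) = Re ((complex_of_real fx + \<i> * complex_of_real fy) * cnj V / complex_of_real f)"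
    and i: "Im (X + \<i> * Y) = Im ((complex_of_real fx + \<i> * complex_of_real fy) * cnj V / complex_of_real f)"
    by simp_all
  show "Re X - Im Y = fx / f * Re V + fy / f * Im V" using r assms(1) by (simp add: field_simps)
  show "Im X + Re Y = fy / f * Re V - fx / f * Im V" using i assms(1) by (simp add: field_simps)
qed



theorem mainTheorem7:
  fixes \<Omega> :: "complex set" and p q u0 :: "complex \<Rightarrow> real" and W :: "complex \<Rightarrow> complex"
  assumes dom: "open \<Omega>" "connected \<Omega>" "\<Omega> \<noteq> {}"
    and p_C2: "C2_on \<Omega> p" and p_pos: "\<forall>z\<in>\<Omega>. p z > 0"
    and u0_C2: "C2_on \<Omega> u0" and u0_pos: "\<forall>z\<in>\<Omega>. u0 z > 0"
    and u0_sol: "\<forall>z\<in>\<Omega>. div_grad_op p q u0 z = 0"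
    and W_C2: "C2_on \<Omega> W"
    and W_eq: "\<forall>z\<in>\<Omega>. dbar W z =
       dbar (\<lambda>w. complex_of_real (sqrt (p w) * u0 w)) z
         / complex_of_real (sqrt (p z) * u0 z) * cnj (W z)"
  shows "(\<forall>z\<in>\<Omega>. div_grad_op p q (\<lambda>w. Re (W w) / sqrt (p w)) z = 0) \<and>
         (\<forall>z\<in>\<Omega>. div_grad_op (\<lambda>w. 1 / p w)
           (\<lambda>w. - (1 / p w) * (q w / p w
              + 2 * ((px p w / p w) * (px u0 w / u0 w) + (py p w / p w) * (py u0 w / u0 w))
              + 2 * ((px u0 w / u0 w)\<^sup>2 + (py u0 w / u0 w)\<^sup>2)))
           (\<lambda>w. sqrt (p w) * Im (W w)) z = 0)"
proof -
  note S = dom(1)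
  have pp: "\<And>w. w \<in> \<Omega> \<Longrightarrow> p w > 0" using p_pos by auto
  have up: "\<And>w. w \<in> \<Omega> \<Longrightarrow> u0 w > 0" using u0_pos by auto
  have sp: "\<And>w. w \<in> \<Omega> \<Longrightarrow> sqrt (p w) > 0" using pp by simp
  note jp = jet_real[OF S p_C2] and ju = jet_real[OF S u0_C2] and jW = jet_cpx[OF S W_C2]
  have pX: "\<And>w. w \<in> \<Omega> \<Longrightarrow> ((\<lambda>t::real. p (w + complex_of_real t)) has_real_derivative pd 1 p w) (at 0)"
    using jp(1) by simp
  have pY: "\<And>w. w \<in> \<Omega> \<Longrightarrow> ((\<lambda>t::real. p (w + \<i> * complex_of_real t)) has_real_derivative pd \<i> p w) (at 0)"
    using jp(2) by simp
  have pXX: "\<And>w. w \<in> \<Omega> \<Longrightarrow> ((\<lambda>t::real. pd 1 p (w + complex_of_real t)) has_real_derivative pd 1 (pd 1 p) w) (at 0)"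
    using jp(3) by simp
  have pXY: "\<And>w. w \<in> \<Omega> \<Longrightarrow> ((\<lambda>t::real. pd 1 p (w + \<i> * complex_of_real t)) has_real_derivative pd \<i> (pd 1 p) w) (at 0)"
    using jp(4) by simp
  have pYX: "\<And>w. w \<in> \<Omega> \<Longrightarrow> ((\<lambda>t::real. pd \<i> p (w + complex_of_real t)) has_real_derivative pd 1 (pd \<i> p) w) (at 0)"
    using jp(5) by simp
  have pYY: "\<And>w. w \<in> \<Omega> \<Longrightarrow> ((\<lambda>t::real. pd \<i> p (w + \<i> * complex_of_real t)) has_real_derivative pd \<i> (pd \<i> p) w) (at 0)"
    using jp(6) by simp
  have psym: "\<And>w. w \<in> \<Omega> \<Longrightarrow> pd \<i> (pd 1 p) w = pd 1 (pd \<i> p) w" using jp(7) by simp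
  have uX: "\<And>w. w \<in> \<Omega> \<Longrightarrow> ((\<lambda>t::real. u0 (w + complex_of_real t)) has_real_derivative pd 1 u0 w) (at 0)"
    using ju(1) by simp
  have uY: "\<And>w. w \<in> \<Omega> \<Longrightarrow> ((\<lambda>t::real. u0 (w + \<i> * complex_of_real t)) has_real_derivative pd \<i> u0 w) (at 0)"
    using ju(2) by simp
  have uXX: "\<And>w. w \<in> \<Omega> \<Longrightarrow> ((\<lambda>t::real. pd 1 u0 (w + complex_of_real t)) has_real_derivative pd 1 (pd 1 u0) w) (at 0)"
    using ju(3) by simp
  have uXY: "\<And>w. w \<in> \<Omega> \<Longrightarrow> ((\<lambda>t::real. pd 1 u0 (w + \<i> * complex_of_real t)) has_real_derivative pd \<i> (pd 1 u0) w) (at 0)"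
    using ju(4) by simp
  have uYX: "\<And>w. w \<in> \<Omega> \<Longrightarrow> ((\<lambda>t::real. pd \<i> u0 (w + complex_of_real t)) has_real_derivative pd 1 (pd \<i> u0) w) (at 0)"
    using ju(5) by simp
  have uYY: "\<And>w. w \<in> \<Omega> \<Longrightarrow> ((\<lambda>t::real. pd \<i> u0 (w + \<i> * complex_of_real t)) has_real_derivative pd \<i> (pd \<i> u0) w) (at 0)"
    using ju(6) by simp
  have usym: "\<And>w. w \<in> \<Omega> \<Longrightarrow> pd \<i> (pd 1 u0) w = pd 1 (pd \<i> u0) w" using ju(7) by simp
  have AX: "\<And>w. w \<in> \<Omega> \<Longrightarrow> ((\<lambda>t::real. Re (W (w + complex_of_real t))) has_real_derivative Re (pd 1 W w)) (at 0)"
    using jW(1) by simp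
  have AY: "\<And>w. w \<in> \<Omega> \<Longrightarrow> ((\<lambda>t::real. Re (W (w + \<i> * complex_of_real t))) has_real_derivative Re (pd \<i> W w)) (at 0)"
    using jW(2) by simp
  have AXX: "\<And>w. w \<in> \<Omega> \<Longrightarrow> ((\<lambda>t::real. Re (pd 1 W (w + complex_of_real t))) has_real_derivative Re (pd 1 (pd 1 W) w)) (at 0)"
    using jW(3) by simp
  have AXY: "\<And>w. w \<in> \<Omega> \<Longrightarrow> ((\<lambda>t::real. Re (pd 1 W (w + \<i> * complex_of_real t))) has_real_derivative Re (pd \<i> (pd 1 W) w)) (at 0)"
    using jW(4) by simp
  have AYX: "\<And>w. w \<in> \<Omega> \<Longrightarrow> ((\<lambda>t::real. Re (pd \<i> W (w + complex_of_real t))) has_real_derivative Re (pd 1 (pd \<i> W) w)) (at 0)"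
    using jW(5) by simp
  have AYY: "\<And>w. w \<in> \<Omega> \<Longrightarrow> ((\<lambda>t::real. Re (pd \<i> W (w + \<i> * complex_of_real t))) has_real_derivative Re (pd \<i> (pd \<i> W) w)) (at 0)"
    using jW(6) by simp
  have BX: "\<And>w. w \<in> \<Omega> \<Longrightarrow> ((\<lambda>t::real. Im (W (w + complex_of_real t))) has_real_derivative Im (pd 1 W w)) (at 0)"
    using jW(7) by simp
  have BY: "\<And>w. w \<in> \<Omega> \<Longrightarrow> ((\<lambda>t::real. Im (W (w + \<i> * complex_of_real t))) has_real_derivative Im (pd \<i> W w)) (at 0)"
    using jW(8) by simp
  have BXX: "\<And>w. w \<in> \<Omega> \<Longrightarrow> ((\<lambda>t::real. Im (pd 1 W (w + complex_of_real t))) has_real_derivative Im (pd 1 (pd 1 W) w)) (at 0)"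
    using jW(9) by simp
  have BXY: "\<And>w. w \<in> \<Omega> \<Longrightarrow> ((\<lambda>t::real. Im (pd 1 W (w + \<i> * complex_of_real t))) has_real_derivative Im (pd \<i> (pd 1 W) w)) (at 0)"
    using jW(10) by simp
  have BYX: "\<And>w. w \<in> \<Omega> \<Longrightarrow> ((\<lambda>t::real. Im (pd \<i> W (w + complex_of_real t))) has_real_derivative Im (pd 1 (pd \<i> W) w)) (at 0)"
    using jW(11) by simp
  have BYY: "\<And>w. w \<in> \<Omega> \<Longrightarrow> ((\<lambda>t::real. Im (pd \<i> W (w + \<i> * complex_of_real t))) has_real_derivative Im (pd \<i> (pd \<i> W) w)) (at 0)"
    using jW(12) by simp
  have Asym: "\<And>w. w \<in> \<Omega> \<Longrightarrow> Re (pd \<i> (pd 1 W) w) = Re (pd 1 (pd \<i> W) w)" using jW(13) by simp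
  have Bsym: "\<And>w. w \<in> \<Omega> \<Longrightarrow> Im (pd \<i> (pd 1 W) w) = Im (pd 1 (pd \<i> W) w)" using jW(14) by simp

  have E: "Re (pd 1 W w) - Im (pd \<i> W w) = (pd 1 p w / (2 * p w) + pd 1 u0 w / u0 w) * Re (W w)
              + (pd \<i> p w / (2 * p w) + pd \<i> u0 w / u0 w) * Im (W w)
        \<and> Im (pd 1 W w) + Re (pd \<i> W w) = (pd \<i> p w / (2 * p w) + pd \<i> u0 w / u0 w) * Re (W w)
              - (pd 1 p w / (2 * p w) + pd 1 u0 w / u0 w) * Im (W w)" if w: "w \<in> \<Omega>" for w
  proof -
    have Fx: "((\<lambda>t::real. sqrt (p (w + complex_of_real t)) * u0 (w + complex_of_real t)) has_real_derivative
        (pd 1 p w / (2 * sqrt (p w)) * u0 w + sqrt (p w) * pd 1 u0 w)) (at 0)"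
      apply (rule sqrt_line1[OF pX[OF w] pp[OF w]] uX[OF w] derivative_eq_intros)+
      by simp
    have Fy: "((\<lambda>t::real. sqrt (p (w + \<i> * complex_of_real t)) * u0 (w + \<i> * complex_of_real t)) has_real_derivative
        (pd \<i> p w / (2 * sqrt (p w)) * u0 w + sqrt (p w) * pd \<i> u0 w)) (at 0)"
      apply (rule sqrt_line[OF pY[OF w] pp[OF w]] uY[OF w] derivative_eq_intros)+
      by simp
    have eq: "(pd 1 W w + \<i> * pd \<i> W w) / 2 = (complex_of_real (pd 1 p w / (2 * sqrt (p w)) * u0 w + sqrt (p w) * pd 1 u0 w)
        + \<i> * complex_of_real (pd \<i> p w / (2 * sqrt (p w)) * u0 w + sqrt (p w) * pd \<i> u0 w)) / 2
        / complex_of_real (sqrt (p w) * u0 w) * cnj (W w)"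
    proof -
      have "dbar W w = dbar (\<lambda>w. complex_of_real (sqrt (p w) * u0 w)) w
         / complex_of_real (sqrt (p w) * u0 w) * cnj (W w)" using W_eq w by blast
      then show ?thesis unfolding dbar_def px_pd py_pd pd_ofreal1[OF Fx] pd_ofreal[OF Fy] .
    qed
    have nz: "sqrt (p w) * u0 w \<noteq> 0" using sp[OF w] up[OF w] by simp
    have r1: "(pd 1 p w / (2 * sqrt (p w)) * u0 w + sqrt (p w) * pd 1 u0 w) / (sqrt (p w) * u0 w)
        = pd 1 p w / (2 * p w) + pd 1 u0 w / u0 w"
      using sp[OF w] up[OF w] pp[OF w] by (simp add: field_simps)
    have r2: "(pd \<i> p w / (2 * sqrt (p w)) * u0 w + sqrt (p w) * pd \<i> u0 w) / (sqrt (p w) * u0 w)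
        = pd \<i> p w / (2 * p w) + pd \<i> u0 w / u0 w"
      using sp[OF w] up[OF w] pp[OF w] by (simp add: field_simps)
    show ?thesis using E_alg[OF nz eq] unfolding r1 r2 by simp
  qed
  show ?thesis
  proof (intro conjI ballI)
    fix z assume z: "z \<in> \<Omega>"
    note facts = pX[OF z] pY[OF z] pXX[OF z] pXY[OF z] pYX[OF z] pYY[OF z]
      uX[OF z] uY[OF z] uXX[OF z] uXY[OF z] uYX[OF z] uYY[OF z]
      AX[OF z] AY[OF z] AXX[OF z] AXY[OF z] AYX[OF z] AYY[OF z]
      BX[OF z] BY[OF z] BXX[OF z] BXY[OF z] BYX[OF z] BYY[OF z]
    note pos = pp[OF z] up[OF z] sp[OF z]
    have H0: "pd 1 p z * pd 1 u0 z + p z * pd 1 (pd 1 u0) z + pd \<i> p z * pd \<i> u0 z + p z * pd \<i> (pd \<i> u0) z + q z * u0 z = 0"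
    proof -
      have "pd 1 (\<lambda>w. p w * pd 1 u0 w) z = pd 1 p z * pd 1 u0 z + p z * pd 1 (pd 1 u0) z"
        apply (rule pd_eq1)
        apply (rule facts derivative_eq_intros refl | (insert pos, simp; fail))+
        by (simp?)
      moreover have "pd \<i> (\<lambda>w. p w * pd \<i> u0 w) z = pd \<i> p z * pd \<i> u0 z + p z * pd \<i> (pd \<i> u0) z"
        apply (rule pd_eq)
        apply (rule facts derivative_eq_intros refl | (insert pos, simp; fail))+
        by (simp?)
      ultimately show ?thesis using u0_sol z unfolding div_grad_op_def px_pd py_pd by auto
    qed
    have E1x: "Re (pd 1 (pd 1 W) z) - Im (pd 1 (pd \<i> W) z) =
       ((pd 1 (pd 1 p) z * p z - pd 1 p z * pd 1 p z)/(2*(p z)^2) + (pd 1 (pd 1 u0) z * u0 z - pd 1 u0 z * pd 1 u0 z)/(u0 z)^2) * Re (W z)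
       + (pd 1 p z / (2 * p z) + pd 1 u0 z / u0 z) * Re (pd 1 W z)
       + ((pd 1 (pd \<i> p) z * p z - pd \<i> p z * pd 1 p z)/(2*(p z)^2) + (pd 1 (pd \<i> u0) z * u0 z - pd \<i> u0 z * pd 1 u0 z)/(u0 z)^2) * Im (W z)
       + (pd \<i> p z / (2 * p z) + pd \<i> u0 z / u0 z) * Im (pd 1 W z)"
      apply (rule line_unique1[OF S z, where F="\<lambda>w. Re (pd 1 W w) - Im (pd \<i> W w)" and G="\<lambda>w. (pd 1 p w / (2 * p w) + pd 1 u0 w / u0 w) * Re (W w) + (pd \<i> p w / (2 * p w) + pd \<i> u0 w / u0 w) * Im (W w)"])
      subgoal by (rule conjunct1[OF E]) assumption
      subgoal apply (rule facts derivative_eq_intros refl | (insert pos, simp; fail))+ by (simp?)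
      subgoal apply (rule facts derivative_eq_intros refl | (insert pos, simp; fail))+
        using pos by ((simp_all add: field_simps power2_eq_square; simp add: algebra_simps)?)
      done
    have E2y: "Im (pd \<i> (pd 1 W) z) + Re (pd \<i> (pd \<i> W) z) =
       ((pd \<i> (pd \<i> p) z * p z - pd \<i> p z * pd \<i> p z)/(2*(p z)^2) + (pd \<i> (pd \<i> u0) z * u0 z - pd \<i> u0 z * pd \<i> u0 z)/(u0 z)^2) * Re (W z)
       + (pd \<i> p z / (2 * p z) + pd \<i> u0 z / u0 z) * Re (pd \<i> W z)
       - ((pd \<i> (pd 1 p) z * p z - pd 1 p z * pd \<i> p z)/(2*(p z)^2) + (pd \<i> (pd 1 u0) z * u0 z - pd 1 u0 z * pd \<i> u0 z)/(u0 z)^2) * Im (W z)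
       - (pd 1 p z / (2 * p z) + pd 1 u0 z / u0 z) * Im (pd \<i> W z)"
      apply (rule line_unique[OF S z, where e="\<i>" and F="\<lambda>w. Im (pd 1 W w) + Re (pd \<i> W w)" and G="\<lambda>w. (pd \<i> p w / (2 * p w) + pd \<i> u0 w / u0 w) * Re (W w) - (pd 1 p w / (2 * p w) + pd 1 u0 w / u0 w) * Im (W w)"])
      subgoal by (rule conjunct2[OF E]) assumption
      subgoal apply (rule facts derivative_eq_intros refl | (insert pos, simp; fail))+ by (simp?)
      subgoal apply (rule facts derivative_eq_intros refl | (insert pos, simp; fail))+
        using pos by ((simp_all add: field_simps power2_eq_square; simp add: algebra_simps)?)
      done
    have E1y: "Re (pd \<i> (pd 1 W) z) - Im (pd \<i> (pd \<i> W) z) =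
       ((pd \<i> (pd 1 p) z * p z - pd 1 p z * pd \<i> p z)/(2*(p z)^2) + (pd \<i> (pd 1 u0) z * u0 z - pd 1 u0 z * pd \<i> u0 z)/(u0 z)^2) * Re (W z)
       + (pd 1 p z / (2 * p z) + pd 1 u0 z / u0 z) * Re (pd \<i> W z)
       + ((pd \<i> (pd \<i> p) z * p z - pd \<i> p z * pd \<i> p z)/(2*(p z)^2) + (pd \<i> (pd \<i> u0) z * u0 z - pd \<i> u0 z * pd \<i> u0 z)/(u0 z)^2) * Im (W z)
       + (pd \<i> p z / (2 * p z) + pd \<i> u0 z / u0 z) * Im (pd \<i> W z)"
      apply (rule line_unique[OF S z, where e="\<i>" and F="\<lambda>w. Re (pd 1 W w) - Im (pd \<i> W w)" and G="\<lambda>w. (pd 1 p w / (2 * p w) + pd 1 u0 w / u0 w) * Re (W w) + (pd \<i> p w / (2 * p w) + pd \<i> u0 w / u0 w) * Im (W w)"])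
      subgoal by (rule conjunct1[OF E]) assumption
      subgoal apply (rule facts derivative_eq_intros refl | (insert pos, simp; fail))+ by (simp?)
      subgoal apply (rule facts derivative_eq_intros refl | (insert pos, simp; fail))+
        using pos by ((simp_all add: field_simps power2_eq_square; simp add: algebra_simps)?)
      done
    have E2x: "Im (pd 1 (pd 1 W) z) + Re (pd 1 (pd \<i> W) z) =
       ((pd 1 (pd \<i> p) z * p z - pd \<i> p z * pd 1 p z)/(2*(p z)^2) + (pd 1 (pd \<i> u0) z * u0 z - pd \<i> u0 z * pd 1 u0 z)/(u0 z)^2) * Re (W z)
       + (pd \<i> p z / (2 * p z) + pd \<i> u0 z / u0 z) * Re (pd 1 W z)
       - ((pd 1 (pd 1 p) z * p z - pd 1 p z * pd 1 p z)/(2*(p z)^2) + (pd 1 (pd 1 u0) z * u0 z - pd 1 u0 z * pd 1 u0 z)/(u0 z)^2) * Im (W z)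
       - (pd 1 p z / (2 * p z) + pd 1 u0 z / u0 z) * Im (pd 1 W z)"
      apply (rule line_unique1[OF S z, where F="\<lambda>w. Im (pd 1 W w) + Re (pd \<i> W w)" and G="\<lambda>w. (pd \<i> p w / (2 * p w) + pd \<i> u0 w / u0 w) * Re (W w) - (pd 1 p w / (2 * p w) + pd 1 u0 w / u0 w) * Im (W w)"])
      subgoal by (rule conjunct2[OF E]) assumption
      subgoal apply (rule facts derivative_eq_intros refl | (insert pos, simp; fail))+ by (simp?)
      subgoal apply (rule facts derivative_eq_intros refl | (insert pos, simp; fail))+
        using pos by ((simp_all add: field_simps power2_eq_square; simp add: algebra_simps)?)
      done
    have sqsq: "sqrt (p z) * sqrt (p z) = p z" using pos by simp
    have E1z: "Re (pd 1 W z) - Im (pd \<i> W z) = (pd 1 p z / (2 * p z) + pd 1 u0 z / u0 z) * Re (W z)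
              + (pd \<i> p z / (2 * p z) + pd \<i> u0 z / u0 z) * Im (W z)" using E[OF z] by blast
    have E2z: "Im (pd 1 W z) + Re (pd \<i> W z) = (pd \<i> p z / (2 * p z) + pd \<i> u0 z / u0 z) * Re (W z)
              - (pd 1 p z / (2 * p z) + pd 1 u0 z / u0 z) * Im (W z)" using E[OF z] by blast
    show "div_grad_op p q (\<lambda>w. Re (W w) / sqrt (p w)) z = 0"
    proof -
      have ux: "pd 1 (\<lambda>w. Re (W w) / sqrt (p w)) w = (Re (pd 1 W w) - Re (W w) * pd 1 p w / (2 * p w)) / sqrt (p w)"
        if w: "w \<in> \<Omega>" for w
      proof -
        obtain s where s1: "sqrt (p w) = s" and s3: "p w = s * s" and spos: "s > 0"
          using pp[OF w] by (metis real_sqrt_gt_zero real_sqrt_mult_self abs_of_pos)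
        show ?thesis
        apply (rule pd_eq1)
        apply (rule AX[OF w] pX[OF w] sqrt_line1[OF pX[OF w] pp[OF w]] derivative_eq_intros refl
           | (insert pp[OF w], simp; fail))+
        using spos by ((simp only: of_real_0 mult_zero_right add_0_right)?, (simp only: s1)?, (simp only: s3)?, (simp add: field_simps)?, (simp add: algebra_simps eval_nat_numeral)?)
      qed
      have uy: "pd \<i> (\<lambda>w. Re (W w) / sqrt (p w)) w = (Re (pd \<i> W w) - Re (W w) * pd \<i> p w / (2 * p w)) / sqrt (p w)"
        if w: "w \<in> \<Omega>" for w
      proof -
        obtain s where s1: "sqrt (p w) = s" and s3: "p w = s * s" and spos: "s > 0"
          using pp[OF w] by (metis real_sqrt_gt_zero real_sqrt_mult_self abs_of_pos)
        show ?thesis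
        apply (rule pd_eq)
        apply (rule AY[OF w] pY[OF w] sqrt_line[OF pY[OF w] pp[OF w]] derivative_eq_intros refl
           | (insert pp[OF w], simp; fail))+
        using spos by ((simp only: of_real_0 mult_zero_right add_0_right)?, (simp only: s1)?, (simp only: s3)?, (simp add: field_simps)?, (simp add: algebra_simps eval_nat_numeral)?)
      qed
      have D1: "pd 1 (\<lambda>w. p w * pd 1 (\<lambda>w. Re (W w) / sqrt (p w)) w) z =
          pd 1 p z * ((Re (pd 1 W z) - Re (W z) * pd 1 p z / (2 * p z)) / sqrt (p z))
          + p z * ((Re (pd 1 (pd 1 W) z) - (Re (pd 1 W z) * pd 1 p z + Re (W z) * pd 1 (pd 1 p) z) / (2 * p z)
                  + Re (W z) * pd 1 p z * pd 1 p z / (2 * (p z)^2)) / sqrt (p z)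
                 - (Re (pd 1 W z) - Re (W z) * pd 1 p z / (2 * p z)) * pd 1 p z / (2 * sqrt (p z) * p z))"
      proof -
        obtain s where s1: "sqrt (p z) = s" and s3: "p z = s * s" and spos: "s > 0"
          using pos by (metis real_sqrt_gt_zero real_sqrt_mult_self abs_of_pos)
        show ?thesis
        apply (rule pd_eq1)
        apply (rule line_transfer1[OF S z, where G="\<lambda>w. p w * ((Re (pd 1 W w) - Re (W w) * pd 1 p w / (2 * p w)) / sqrt (p w))"])
        subgoal using ux by simp
        apply (rule facts sqrt_line1[OF pX[OF z] pp[OF z]] derivative_eq_intros refl | (insert pos, simp; fail))+
        using spos by ((simp only: of_real_0 mult_zero_right add_0_right)?, (simp only: s1)?, (simp only: s3)?, (simp add: field_simps)?, (simp add: algebra_simps eval_nat_numeral)?)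
      qed
      have D2: "pd \<i> (\<lambda>w. p w * pd \<i> (\<lambda>w. Re (W w) / sqrt (p w)) w) z =
          pd \<i> p z * ((Re (pd \<i> W z) - Re (W z) * pd \<i> p z / (2 * p z)) / sqrt (p z))
          + p z * ((Re (pd \<i> (pd \<i> W) z) - (Re (pd \<i> W z) * pd \<i> p z + Re (W z) * pd \<i> (pd \<i> p) z) / (2 * p z)
                  + Re (W z) * pd \<i> p z * pd \<i> p z / (2 * (p z)^2)) / sqrt (p z)
                 - (Re (pd \<i> W z) - Re (W z) * pd \<i> p z / (2 * p z)) * pd \<i> p z / (2 * sqrt (p z) * p z))"
      proof -
        obtain s where s1: "sqrt (p z) = s" and s3: "p z = s * s" and spos: "s > 0"
          using pos by (metis real_sqrt_gt_zero real_sqrt_mult_self abs_of_pos)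
        show ?thesis
        apply (rule pd_eq)
        apply (rule line_transfer[OF S z, where G="\<lambda>w. p w * ((Re (pd \<i> W w) - Re (W w) * pd \<i> p w / (2 * p w)) / sqrt (p w))"])
        subgoal using uy by simp
        apply (rule facts sqrt_line[OF pY[OF z] pp[OF z]] derivative_eq_intros refl | (insert pos, simp; fail))+
        using spos by ((simp only: of_real_0 mult_zero_right add_0_right)?, (simp only: s1)?, (simp only: s3)?, (simp add: field_simps)?, (simp add: algebra_simps eval_nat_numeral)?)
      qed
      show ?thesis
        unfolding div_grad_op_def px_pd py_pd D1 D2
        by (rule alg_i[OF pos sqsq H0 E1z E2z E1x E2y[unfolded psym[OF z] usym[OF z] Bsym[OF z]]])
    qed
    show "div_grad_op (\<lambda>w. 1 / p w)
           (\<lambda>w. - (1 / p w) * (q w / p w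
              + 2 * ((px p w / p w) * (px u0 w / u0 w) + (py p w / p w) * (py u0 w / u0 w))
              + 2 * ((px u0 w / u0 w)\<^sup>2 + (py u0 w / u0 w)\<^sup>2)))
           (\<lambda>w. sqrt (p w) * Im (W w)) z = 0"
    proof -
      have vx: "pd 1 (\<lambda>w. sqrt (p w) * Im (W w)) w = pd 1 p w / (2 * sqrt (p w)) * Im (W w) + sqrt (p w) * Im (pd 1 W w)"
        if w: "w \<in> \<Omega>" for w
      proof -
        obtain s where s1: "sqrt (p w) = s" and s3: "p w = s * s" and spos: "s > 0"
          using pp[OF w] by (metis real_sqrt_gt_zero real_sqrt_mult_self abs_of_pos)
        show ?thesis
        apply (rule pd_eq1)
        apply (rule BX[OF w] pX[OF w] sqrt_line1[OF pX[OF w] pp[OF w]] derivative_eq_intros refl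
           | (insert pp[OF w], simp; fail))+
        using spos by ((simp only: of_real_0 mult_zero_right add_0_right)?, (simp only: s1)?, (simp only: s3)?, (simp add: field_simps)?, (simp add: algebra_simps eval_nat_numeral)?)
      qed
      have vy: "pd \<i> (\<lambda>w. sqrt (p w) * Im (W w)) w = pd \<i> p w / (2 * sqrt (p w)) * Im (W w) + sqrt (p w) * Im (pd \<i> W w)"
        if w: "w \<in> \<Omega>" for w
      proof -
        obtain s where s1: "sqrt (p w) = s" and s3: "p w = s * s" and spos: "s > 0"
          using pp[OF w] by (metis real_sqrt_gt_zero real_sqrt_mult_self abs_of_pos)
        show ?thesis
        apply (rule pd_eq)
        apply (rule BY[OF w] pY[OF w] sqrt_line[OF pY[OF w] pp[OF w]] derivative_eq_intros refl
           | (insert pp[OF w], simp; fail))+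
        using spos by ((simp only: of_real_0 mult_zero_right add_0_right)?, (simp only: s1)?, (simp only: s3)?, (simp add: field_simps)?, (simp add: algebra_simps eval_nat_numeral)?)
      qed
      have D1: "pd 1 (\<lambda>w. 1 / p w * pd 1 (\<lambda>w. sqrt (p w) * Im (W w)) w) z =
          - pd 1 p z / (p z * p z) * (pd 1 p z / (2 * sqrt (p z)) * Im (W z) + sqrt (p z) * Im (pd 1 W z))
          + (1 / p z) * ((pd 1 (pd 1 p) z / (2 * sqrt (p z)) - pd 1 p z * pd 1 p z / (4 * sqrt (p z) * p z)) * Im (W z)
              + pd 1 p z / sqrt (p z) * Im (pd 1 W z) + sqrt (p z) * Im (pd 1 (pd 1 W) z))"
      proof -
        obtain s where s1: "sqrt (p z) = s" and s3: "p z = s * s" and spos: "s > 0"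
          using pos by (metis real_sqrt_gt_zero real_sqrt_mult_self abs_of_pos)
        show ?thesis
        apply (rule pd_eq1)
        apply (rule line_transfer1[OF S z, where G="\<lambda>w. 1 / p w * (pd 1 p w / (2 * sqrt (p w)) * Im (W w) + sqrt (p w) * Im (pd 1 W w))"])
        subgoal using vx by simp
        apply (rule facts sqrt_line1[OF pX[OF z] pp[OF z]] derivative_eq_intros refl | (insert pos, simp; fail))+
        using spos by ((simp only: of_real_0 mult_zero_right add_0_right)?, (simp only: s1)?, (simp only: s3)?, (simp add: field_simps)?, (simp add: algebra_simps eval_nat_numeral)?)
      qed
      have D2: "pd \<i> (\<lambda>w. 1 / p w * pd \<i> (\<lambda>w. sqrt (p w) * Im (W w)) w) z =
          - pd \<i> p z / (p z * p z) * (pd \<i> p z / (2 * sqrt (p z)) * Im (W z) + sqrt (p z) * Im (pd \<i> W z))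
          + (1 / p z) * ((pd \<i> (pd \<i> p) z / (2 * sqrt (p z)) - pd \<i> p z * pd \<i> p z / (4 * sqrt (p z) * p z)) * Im (W z)
              + pd \<i> p z / sqrt (p z) * Im (pd \<i> W z) + sqrt (p z) * Im (pd \<i> (pd \<i> W) z))"
      proof -
        obtain s where s1: "sqrt (p z) = s" and s3: "p z = s * s" and spos: "s > 0"
          using pos by (metis real_sqrt_gt_zero real_sqrt_mult_self abs_of_pos)
        show ?thesis
        apply (rule pd_eq)
        apply (rule line_transfer[OF S z, where G="\<lambda>w. 1 / p w * (pd \<i> p w / (2 * sqrt (p w)) * Im (W w) + sqrt (p w) * Im (pd \<i> W w))"])
        subgoal using vy by simp
        apply (rule facts sqrt_line[OF pY[OF z] pp[OF z]] derivative_eq_intros refl | (insert pos, simp; fail))+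
        using spos by ((simp only: of_real_0 mult_zero_right add_0_right)?, (simp only: s1)?, (simp only: s3)?, (simp add: field_simps)?, (simp add: algebra_simps eval_nat_numeral)?)
      qed
      show ?thesis
        unfolding div_grad_op_def px_pd py_pd D1 D2
        by (rule alg_ii[OF pos sqsq H0 E1z E2z E2x E1y[unfolded psym[OF z] usym[OF z] Asym[OF z]]])
    qed
  qed
qed


end
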